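(* Fix $c\in\mathbb{N}_0$ and let $A=\mathbb{K}[x_ix_j: i,j\in\mathbb{N},\ i\le j\le i+c]\subseteq R=\mathbb{K}[x_i: i\in\mathbb{N}]$. Then the set of string presentations of the monomials of $A$ is $\{x_{i_1}x_{i_2}\cdots x_{i_{2d-1}}x_{i_{2d}}: d\in\mathbb{N}_0,\ i_1\le i_2\le\cdots\le i_{2d},\ i_{2k}-i_{2k-1}\le c \text{ for } 1\le k\le d\}.$
   Context: $\mathbb{K}$ is a field. The string presentation of a monomial of $R$ is the unique word in the noncommuting letters $x_1,x_2,\dots$ representing it in which the indices appear in nondecreasing order from left to right (e.g. $x_1x_2\cdot x_1x_3$ has string presentation $x_1x_1x_2x_3$). *)

theory Defs
  imports Main "HOL-Library.Poly_Mapping"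
begin

(* Polynomials over 'k in the variables x_i (i :: nat) are represented as
  (nat -> nat) -> k : a monomial is an exponent vector m,
  and a polynomial maps monomials to coefficients. The paper's ring R only uses
  the variables x_i with i \<ge> 1.*)

type_synonym monom = "nat \<Rightarrow>\<^sub>0 nat"
type_synonym 'k mpoly = "(nat \<Rightarrow>\<^sub>0 nat) \<Rightarrow>\<^sub>0 'k"

definition monom_poly :: "monom \<Rightarrow> 'k::field mpoly" where
  "monom_poly m = Poly_Mapping.single m 1"

definition var :: "nat \<Rightarrow> 'k::field mpoly" where
  "var i = monom_poly (Poly_Mapping.single i 1)"

(* A = K[x_i x_j : 1 \<le> i \<le> j \<le> i + c], the K-subalgebra of R generated by these
  products: the smallest set containing the constants and the generators and closed
  under addition and multiplication (scalar multiples are products with constants).*)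
inductive_set subalg_A :: "nat \<Rightarrow> ('k::field) mpoly set" for c :: nat where
  const: "Poly_Mapping.single 0 a \<in> subalg_A c"
| gen: "1 \<le> i \<Longrightarrow> i \<le> j \<Longrightarrow> j \<le> i + c \<Longrightarrow> var i * var j \<in> subalg_A c"
| add: "p \<in> subalg_A c \<Longrightarrow> q \<in> subalg_A c \<Longrightarrow> p + q \<in> subalg_A c"
| mult: "p \<in> subalg_A c \<Longrightarrow> q \<in> subalg_A c \<Longrightarrow> p * q \<in> subalg_A c"

definition monomials_A :: "'k::field itself \<Rightarrow> nat \<Rightarrow> monom set" where
  "monomials_A _ c = {m. (\<forall>i\<in>Poly_Mapping.keys m. 1 \<le> i) \<and> (monom_poly m :: 'k mpoly) \<in> subalg_A c}"

definition string_pres :: "monom \<Rightarrow> nat list" where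
  "string_pres m = (THE xs. sorted xs \<and> (\<forall>i. count_list xs i = Poly_Mapping.lookup m i))"

end

theory Submission
  imports Defs "HOL-Library.Multiset"
begin

definition pairOK :: "nat \<Rightarrow> nat \<Rightarrow> nat \<Rightarrow> bool" where
  "pairOK c x y = (1 \<le> x \<and> 1 \<le> y \<and> x \<le> y + c \<and> y \<le> x + c)"

inductive goodM :: "nat \<Rightarrow> nat multiset \<Rightarrow> bool" for c where
  emp: "goodM c {#}"
| pr: "pairOK c i j \<Longrightarrow> goodM c M \<Longrightarrow> goodM c (add_mset i (add_mset j M))"

lemma goodM_plus: "goodM c M \<Longrightarrow> goodM c N \<Longrightarrow> goodM c (M + N)"
  by (induction M rule: goodM.induct) (auto intro: goodM.intros)

lemma goodM_extract:
  "goodM c M \<Longrightarrow> x \<in># M \<Longrightarrow> \<exists>y M'. M = add_mset x (add_mset y M') \<and> pairOK c x y \<and> goodM c M'"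
proof (induction M rule: goodM.induct)
  case emp then show ?case by simp
next
  case (pr i j M)
  show ?case
  proof (cases "x = i")
    case True then show ?thesis using pr by auto
  next
    case False
    show ?thesis
    proof (cases "x = j")
      case True
      have "pairOK c j i" using pr(1) by (auto simp: pairOK_def)
      then show ?thesis using pr True
        by (intro exI[of _ i] exI[of _ M]) auto
    next
      case False
      with \<open>x \<noteq> i\<close> pr(4) have "x \<in># M" by auto
      then obtain y M' where "M = add_mset x (add_mset y M')" "pairOK c x y" "goodM c M'"
        using pr(3) by blast
      then show ?thesis using pr(1)
        by (intro exI[of _ y] exI[of _ "add_mset i (add_mset j M')"])
           (auto intro: goodM.intros)
    qed
  qed
qed

fun okc :: "nat \<Rightarrow> nat list \<Rightarrow> bool" where
  "okc c [] = True"
| "okc c [x] = False"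
| "okc c (x # y # r) = (y - x \<le> c \<and> okc c r)"

lemma okc_iff:
  "okc c xs \<longleftrightarrow> (\<exists>d. length xs = 2 * d \<and> (\<forall>k<d. xs ! (2 * k + 1) - xs ! (2 * k) \<le> c))"
proof (induction c xs rule: okc.induct)
  case (1 c) then show ?case by simp
next
  case (2 c x) then show ?case by simp
next
  case (3 c x y r)
  show ?case
  proof
    assume "okc c (x # y # r)"
    then obtain d where d: "length r = 2 * d" "\<forall>k<d. r ! (2 * k + 1) - r ! (2 * k) \<le> c" "y - x \<le> c"
      using 3 by auto
    show "\<exists>d. length (x # y # r) = 2 * d \<and> (\<forall>k<d. (x # y # r) ! (2 * k + 1) - (x # y # r) ! (2 * k) \<le> c)"
    proof (intro exI[of _ "Suc d"] conjI allI impI)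
      show "length (x # y # r) = 2 * Suc d" using d by simp
    next
      fix k assume "k < Suc d"
      then show "(x # y # r) ! (2 * k + 1) - (x # y # r) ! (2 * k) \<le> c"
        using d by (cases k) auto
    qed
  next
    assume "\<exists>d. length (x # y # r) = 2 * d \<and> (\<forall>k<d. (x # y # r) ! (2 * k + 1) - (x # y # r) ! (2 * k) \<le> c)"
    then obtain d where d: "length (x # y # r) = 2 * d" "\<forall>k<d. (x # y # r) ! (2 * k + 1) - (x # y # r) ! (2 * k) \<le> c"
      by blast
    then obtain d' where d': "d = Suc d'" by (cases d) auto
    have "y - x \<le> c" using d(2)[rule_format, of 0] d' by simp
    moreover have "\<forall>k<d'. r ! (2 * k + 1) - r ! (2 * k) \<le> c"
    proof (intro allI impI)
      fix k assume "k < d'"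
      then have "(x # y # r) ! (2 * Suc k + 1) - (x # y # r) ! (2 * Suc k) \<le> c"
        using d(2) d' by blast
      then show "r ! (2 * k + 1) - r ! (2 * k) \<le> c" by simp
    qed
    moreover have "length r = 2 * d'" using d d' by simp
    ultimately show "okc c (x # y # r)" using 3 by auto
  qed
qed

lemma goodM_size: "goodM c M \<Longrightarrow> even (size M)"
  by (induction M rule: goodM.induct) auto

lemma key: "sorted xs \<Longrightarrow> goodM c (mset xs) \<Longrightarrow> okc c xs"
proof (induction "length xs" arbitrary: xs rule: less_induct)
  case less
  show ?case
  proof (cases xs)
    case Nil then show ?thesis by simp
  next
    case (Cons a t)
    note xs = Cons
    have ev: "even (length xs)" using goodM_size[OF less(3)] by simp
    then obtain a' rest where t: "t = a' # rest" using xs by (cases t) auto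
    have srt: "sorted rest" "a \<le> a'" "\<forall>z\<in>set rest. a' \<le> z" "\<forall>z\<in>set rest. a \<le> z"
      using less(2) xs t by auto
    obtain b M1 where M1: "mset xs = add_mset a (add_mset b M1)" "pairOK c a b" "goodM c M1"
      using goodM_extract[OF less(3), of a] xs by auto
    have mt: "mset (a' # rest) = add_mset b M1" using M1(1) xs t by simp
    then have "b \<in> set (a' # rest)" by (metis set_mset_mset union_single_eq_member)
    then have "a' \<le> b" using srt by auto
    then have d1: "a' - a \<le> c" using M1(2) by (auto simp: pairOK_def)
    have gr: "goodM c (mset rest)"
    proof (cases "a' = b")
      case True
      then show ?thesis using mt M1(3) by simp
    next
      case False
      then have "a' \<in># M1" using mt by (metis insert_DiffM2 insert_noteq_member mset.simps(2) union_single_eq_member)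
      then obtain v M2 where M2: "M1 = add_mset a' (add_mset v M2)" "pairOK c a' v" "goodM c M2"
        using goodM_extract[OF M1(3)] by blast
      have mr: "mset rest = add_mset b (add_mset v M2)" using mt M2(1) by auto
      then have "b \<in> set rest" "v \<in> set rest" by (metis set_mset_mset union_single_eq_member,
          metis mr add_mset_commute set_mset_mset union_single_eq_member)
      then have "a' \<le> b" "a' \<le> v" using srt by auto
      then have "pairOK c b v" using M1(2) M2(2) srt(2) by (auto simp: pairOK_def)
      then show ?thesis using mr M2(3) by (auto intro: goodM.intros)
    qed
    have "okc c rest" using less(1)[of rest] srt(1) gr xs t by simp
    then show ?thesis using d1 xs t by simp
  qed
qed

lemma okc_good: "okc c xs \<Longrightarrow> sorted xs \<Longrightarrow> (\<forall>i\<in>set xs. 1 \<le> i) \<Longrightarrow> goodM c (mset xs)"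
proof (induction c xs rule: okc.induct)
  case (3 c x y r)
  then have "pairOK c x y" by (auto simp: pairOK_def)
  with 3 show ?case by (auto intro: goodM.intros)
qed (auto intro: goodM.intros)

definition lm :: "nat multiset \<Rightarrow> monom" where
  "lm M = sum_mset (image_mset (\<lambda>x. Poly_Mapping.single x 1) M)"

lemma lookup_lm: "Poly_Mapping.lookup (lm M) i = count M i"
  by (induction M) (auto simp: lm_def lookup_add lookup_single when_def)

lemma lm_plus: "lm (M + N) = lm M + lm N"
  by (simp add: lm_def)

lemma keys_lm: "Poly_Mapping.keys (lm M) = set_mset M"
  by (auto simp: in_keys_iff lookup_lm)

lemma subalg_good:
  "(p :: 'k::field mpoly) \<in> subalg_A c \<Longrightarrow> \<forall>m\<in>Poly_Mapping.keys p. \<exists>M. goodM c M \<and> m = lm M"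
proof (induction p rule: subalg_A.induct)
  case (const a)
  have "goodM c {#} \<and> 0 = lm {#}" by (simp add: lm_def goodM.emp)
  then show ?case by auto
next
  case (gen i j)
  have e: "var i * var j = (Poly_Mapping.single (Poly_Mapping.single i 1 + Poly_Mapping.single j 1) 1 :: 'k mpoly)"
    by (simp add: var_def monom_poly_def mult_single)
  have "pairOK c i j" using gen by (auto simp: pairOK_def)
  then have "goodM c {#i, j#}" by (metis goodM.emp goodM.pr)
  moreover have "lm {#i, j#} = Poly_Mapping.single i 1 + Poly_Mapping.single j 1"
    by (simp add: lm_def add.commute)
  ultimately show ?case unfolding e by (metis empty_iff insert_iff keys_single)
next
  case (add p q)
  then show ?case using keys_add[of p q] by blast
next
  case (mult p q)
  show ?case
  proof
    fix m assume "m \<in> Poly_Mapping.keys (p * q)"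
    then obtain a b where "m = a + b" "a \<in> Poly_Mapping.keys p" "b \<in> Poly_Mapping.keys q"
      using keys_mult[of p q] by blast
    then obtain A B where "goodM c A" "a = lm A" "goodM c B" "b = lm B" using mult by blast
    then show "\<exists>M. goodM c M \<and> m = lm M"
      using \<open>m = a + b\<close> by (intro exI[of _ "A + B"]) (simp add: goodM_plus lm_plus)
  qed
qed

lemma good_subalg: "goodM c M \<Longrightarrow> (monom_poly (lm M) :: 'k::field mpoly) \<in> subalg_A c"
proof (induction M rule: goodM.induct)
  case emp
  have "lm {#} = 0" by (simp add: lm_def)
  then show ?case unfolding monom_poly_def using subalg_A.const[where a="1::'k" and c=c] by simp
next
  case (pr i j M)
  have "lm (add_mset i (add_mset j M)) = Poly_Mapping.single i 1 + Poly_Mapping.single j 1 + lm M"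
    by (simp add: lm_def add.assoc)
  then have e: "(monom_poly (lm (add_mset i (add_mset j M))) :: 'k mpoly) = (var i * var j) * monom_poly (lm M)"
    by (simp add: var_def monom_poly_def mult_single)
  have "(var i * var j :: 'k mpoly) \<in> subalg_A c"
  proof (cases "i \<le> j")
    case True then show ?thesis using pr(1) by (auto simp: pairOK_def intro: subalg_A.gen)
  next
    case False
    then have "(var j * var i :: 'k mpoly) \<in> subalg_A c" using pr(1) by (auto simp: pairOK_def intro: subalg_A.gen)
    then show ?thesis by (simp add: mult.commute)
  qed
  then show ?case unfolding e using pr(3) by (rule subalg_A.mult)
qed

lemma string_pres_lm: "sorted xs \<Longrightarrow> string_pres (lm (mset xs)) = xs"
  unfolding string_pres_def
proof (rule the_equality)
  assume "sorted xs"
  then show "sorted xs \<and> (\<forall>i. count_list xs i = Poly_Mapping.lookup (lm (mset xs)) i)"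
    by (simp add: lookup_lm count_mset)
next
  fix ys assume s: "sorted xs" and h: "sorted ys \<and> (\<forall>i. count_list ys i = Poly_Mapping.lookup (lm (mset xs)) i)"
  then have "mset ys = mset xs" by (simp add: multiset_eq_iff lookup_lm count_mset)
  then have "sort xs = ys" "sort xs = xs" using h s properties_for_sort by auto
  then show "ys = xs" by simp
qed

theorem lemma5p1:
  fixes c :: nat
  shows "string_pres ` monomials_A TYPE('k::field) c =
    {xs. \<exists>d. length xs = 2 * d \<and> sorted xs \<and> (\<forall>i\<in>set xs. 1 \<le> i) \<and>
           (\<forall>k<d. xs ! (2 * k + 1) - xs ! (2 * k) \<le> c)}"
proof
  show "string_pres ` monomials_A TYPE('k::field) c \<subseteq> {xs. \<exists>d. length xs = 2 * d \<and> sorted xs \<and> (\<forall>i\<in>set xs. 1 \<le> i) \<and>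
           (\<forall>k<d. xs ! (2 * k + 1) - xs ! (2 * k) \<le> c)}"
  proof
    fix zs assume "zs \<in> string_pres ` monomials_A TYPE('k::field) c"
    then obtain m where m: "zs = string_pres m" "\<forall>i\<in>Poly_Mapping.keys m. 1 \<le> i"
      "(monom_poly m :: 'k mpoly) \<in> subalg_A c"
      by (auto simp: monomials_A_def)
    have "m \<in> Poly_Mapping.keys (monom_poly m :: 'k mpoly)" by (simp add: monom_poly_def)
    then obtain M where M: "goodM c M" "m = lm M" using subalg_good[OF m(3)] by blast
    define xs where "xs = sorted_list_of_multiset M"
    have xs: "mset xs = M" "sorted xs" by (simp_all add: xs_def)
    have "zs = xs" using m(1) M(2) string_pres_lm[OF xs(2)] xs(1) by simp
    moreover have "okc c xs" using key[OF xs(2)] M(1) xs(1) by simp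
    moreover have "\<forall>i\<in>set xs. 1 \<le> i" using m(2) M(2) xs(1) keys_lm by fastforce
    ultimately show "zs \<in> {xs. \<exists>d. length xs = 2 * d \<and> sorted xs \<and> (\<forall>i\<in>set xs. 1 \<le> i) \<and>
           (\<forall>k<d. xs ! (2 * k + 1) - xs ! (2 * k) \<le> c)}"
      using xs(2) okc_iff by blast
  qed
next
  show "{xs. \<exists>d. length xs = 2 * d \<and> sorted xs \<and> (\<forall>i\<in>set xs. 1 \<le> i) \<and>
           (\<forall>k<d. xs ! (2 * k + 1) - xs ! (2 * k) \<le> c)} \<subseteq> string_pres ` monomials_A TYPE('k::field) c"
  proof
    fix xs assume "xs \<in> {xs. \<exists>d. length xs = 2 * d \<and> sorted xs \<and> (\<forall>i\<in>set xs. 1 \<le> i) \<and>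
           (\<forall>k<d. xs ! (2 * k + 1) - xs ! (2 * k) \<le> c)}"
    then have h: "okc c xs" "sorted xs" "\<forall>i\<in>set xs. 1 \<le> i" using okc_iff by blast+
    have g: "goodM c (mset xs)" using okc_good[OF h] .
    have "lm (mset xs) \<in> monomials_A TYPE('k) c"
      unfolding monomials_A_def using good_subalg[OF g] h(3) by (simp add: keys_lm)
    moreover have "string_pres (lm (mset xs)) = xs" using string_pres_lm[OF h(2)] .
    ultimately show "xs \<in> string_pres ` monomials_A TYPE('k::field) c" by (metis image_eqI)
  qed
qed

end
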